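(* Let $N\geq3$ and let $(M,g)$ be an $N$-dimensional Riemannian model with pole $o$ and metric $ds^2=dr^2+\psi^2(r)\,d\omega^2$, where $\psi$ is a $C^\infty$ nonnegative function on $[0,+\infty)$, positive on $(0,+\infty)$, with $\psi'(0)=1$, $\psi^{(2k)}(0)=0$ for all $k\geq0$, and such that $\psi(r)=A\,r\,e^{br^{a+1}}$ for $r\geq R$, for some $R,A,b>0$ and $a\geq-1$. Then for all $u\in C_c^\infty(M\setminus B_R(o))$, $$\int_M\Big(\frac{\partial u}{\partial r}\Big)^2dv_g\geq\frac{(N-2)^2}{4}\int_M\frac{u^2}{r^2}dv_g+\frac{(a+1)^2b^2(N-1)^2}{4}\int_M r^{2a}u^2dv_g+\frac{b(a+1)(N-1)(N-1+a)}{2}\int_M r^{a-1}u^2dv_g.$$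
   Context: $d\omega^2$ is the standard metric on $\mathbb{S}^{N-1}$, $r$ the geodesic distance from $o$, $B_R(o)$ the geodesic ball of radius $R$ centered at $o$, $\frac{\partial u}{\partial r}$ the radial derivative, $dv_g$ the Riemannian volume. *)

theory Defs
  imports "HOL-Analysis.Analysis"
begin

fun Ck :: "nat \<Rightarrow> ('a::euclidean_space \<Rightarrow> real) \<Rightarrow> bool" where
  "Ck 0 f = continuous_on UNIV f"
| "Ck (Suc k) f = ((\<forall>x. f differentiable (at x)) \<and>
      (\<forall>i\<in>Basis. Ck k (\<lambda>x. frechet_derivative f (at x) i)))"

definition smooth :: "('a::euclidean_space \<Rightarrow> real) \<Rightarrow> bool" where
  "smooth f \<longleftrightarrow> (\<forall>k. Ck k f)"

definition smooth_derivs_nonneg :: "(real \<Rightarrow> real) \<Rightarrow> (nat \<Rightarrow> real \<Rightarrow> real) \<Rightarrow> bool" where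
  "smooth_derivs_nonneg \<psi> d \<longleftrightarrow> (\<forall>x\<ge>0. d 0 x = \<psi> x) \<and>
     (\<forall>k. \<forall>x\<ge>0. (d k has_real_derivative d (Suc k) x) (at x within {0..}))"

text \<open>Model manifold identified with R^N via polar coordinates about the pole:
  r = norm x, dv_g = (psi(r)/r)^(N-1) dx, radial derivative = Du(x)(x/|x|).\<close>
definition model_weight :: "(real \<Rightarrow> real) \<Rightarrow> real ^ 'n \<Rightarrow> real" where
  "model_weight \<psi> x = (\<psi> (norm x) / norm x) ^ (CARD('n) - 1)"

definition radial_deriv :: "(real ^ 'n \<Rightarrow> real) \<Rightarrow> real ^ 'n \<Rightarrow> real" where
  "radial_deriv u x = frechet_derivative u (at x) (x /\<^sub>R norm x)"

end

theory Submission
  imports Defs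
begin

lemma norm_le_cbox:
  fixes x :: "'a::euclidean_space"
  assumes "norm x \<le> r"
  shows "x \<in> cbox (-(r *\<^sub>R One)) (r *\<^sub>R One)"
  unfolding mem_box(2)
proof
  fix i :: 'a assume i: "i \<in> Basis"
  have "\<bar>x \<bullet> i\<bar> \<le> r" using Basis_le_norm[OF i, of x] assms by linarith
  then show "- (r *\<^sub>R One) \<bullet> i \<le> x \<bullet> i \<and> x \<bullet> i \<le> r *\<^sub>R One \<bullet> i"
    using i by (auto simp: inner_minus_left)
qed

lemma dilation_identity:
  fixes h :: "'a::euclidean_space \<Rightarrow> real" and H :: "'a \<Rightarrow> 'a"
  assumes deriv: "\<And>y. (h has_derivative (\<lambda>v. H y \<bullet> v)) (at y)"
    and contH: "continuous_on UNIV H"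
    and M: "M > 0"
    and supp: "\<And>y. norm y > M \<Longrightarrow> h y = 0"
    and suppH: "\<And>y. norm y > M \<Longrightarrow> H y = 0"
  shows "integral UNIV (\<lambda>x. H x \<bullet> x) = - real DIM('a) * integral UNIV h"
proof -
  define B :: 'a where "B = M *\<^sub>R One"
  define T :: "'a set" where "T = cbox (-(2 * M) *\<^sub>R One) ((2 * M) *\<^sub>R One)"
  define U :: "real set" where "U = {1/2<..<2}"
  have contf: "continuous_on UNIV h"
    using deriv by (meson continuous_at_imp_continuous_on has_derivative_continuous)
  define I where "I = integral (cbox (-B) B) h"
  have hI: "(h has_integral I) (cbox (-B) B)"
    unfolding I_def by (rule integrable_integral, rule integrable_continuous, 
       rule continuous_on_subset[OF contf], simp)
  have gl: "((\<lambda>x. h (l *\<^sub>R x)) has_integral (I / l ^ DIM('a))) T" if l: "l \<in> U" for l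
  proof -
    have lpos: "l > 0" using l by (simp add: U_def)
    have "((\<lambda>x. h (l *\<^sub>R x + 0)) has_integral (I /\<^sub>R l ^ DIM('a)))
               (cbox ((-B - 0) /\<^sub>R l) ((B - 0) /\<^sub>R l))"
      using has_integral_affinity_iff[OF lpos, of h 0 I "-B" B] hI by simp
    then have 1: "((\<lambda>x. h (l *\<^sub>R x)) has_integral (I / l ^ DIM('a)))
               (cbox (-((M / l) *\<^sub>R One)) ((M / l) *\<^sub>R One))"
      by (simp add: B_def divide_inverse_commute)
    show ?thesis
    proof (rule has_integral_on_superset[OF 1])
      fix x :: 'a assume x: "x \<notin> cbox (-((M / l) *\<^sub>R One)) ((M / l) *\<^sub>R One)"
      show "h (l *\<^sub>R x) = 0"
      proof (rule ccontr)
        assume "h (l *\<^sub>R x) \<noteq> 0"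
        then have "norm (l *\<^sub>R x) \<le> M" using supp by force
        then have "norm x \<le> M / l" using lpos by (simp add: field_simps)
        then show False using x norm_le_cbox by blast
      qed
    next
      show "cbox (-((M / l) *\<^sub>R One)) ((M / l) *\<^sub>R One) \<subseteq> T"
        unfolding T_def
      proof (rule subset_box_imp(1), intro ballI)
        fix i :: 'a assume i: "i \<in> Basis"
        have "M / l \<le> 2 * M" using l M by (simp add: U_def field_simps)
        then show "(- (2 * M)) *\<^sub>R One \<bullet> i \<le> - ((M / l) *\<^sub>R One) \<bullet> i \<and>
          (M / l) *\<^sub>R One \<bullet> i \<le> (2 * M) *\<^sub>R One \<bullet> i"
          using i by (simp add: inner_minus_left)
      qed
    qed
  qed
  have T_eq: "T = cbox ((- (2 * M)) *\<^sub>R One) ((2 * M) *\<^sub>R One)" by (simp add: T_def)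
  have D1: "((\<lambda>l. integral T (\<lambda>x. h (l *\<^sub>R x))) has_field_derivative
      integral T (\<lambda>x. H (1 *\<^sub>R x) \<bullet> x)) (at 1 within U)"
    unfolding T_eq
  proof (rule leibniz_rule_field_derivative[where fx = "\<lambda>l x. H (l *\<^sub>R x) \<bullet> x"])
    fix l and x :: 'a
    have "((\<lambda>l. h (l *\<^sub>R x)) has_derivative (\<lambda>v. H (l *\<^sub>R x) \<bullet> v) \<circ> (\<lambda>t. t *\<^sub>R x)) (at l within U)"
      by (rule has_derivative_compose[of "\<lambda>l. l *\<^sub>R x", unfolded o_def, folded o_def])
         (auto intro!: derivative_eq_intros deriv)
    then show "((\<lambda>l. h (l *\<^sub>R x)) has_field_derivative H (l *\<^sub>R x) \<bullet> x) (at l within U)"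
      unfolding has_field_derivative_def
      by (simp add: o_def) (erule has_derivative_eq_rhs, auto simp: fun_eq_iff)
  next
    fix l
    show "(\<lambda>x. h (l *\<^sub>R x)) integrable_on cbox ((- (2 * M)) *\<^sub>R One) ((2 * M) *\<^sub>R One)"
      by (rule integrable_continuous, rule continuous_on_compose2[OF contf]) (auto intro!: continuous_intros)
  next
    show "continuous_on (U \<times> cbox ((- (2 * M)) *\<^sub>R One) ((2 * M) *\<^sub>R One)) (\<lambda>(l, x). H (l *\<^sub>R x) \<bullet> x)"
      by (auto intro!: continuous_intros continuous_on_compose2[OF contH] simp: split_beta)
  next
    show "1 \<in> U" "convex U" by (auto simp: U_def)
  qed
  have "((\<lambda>l. integral T (\<lambda>x. h (l *\<^sub>R x))) has_field_derivative
      integral T (\<lambda>x. H x \<bullet> x)) (at 1)"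
    using D1 by (simp add: U_def at_within_open[of 1 "{1/2<..<2::real}"])
  moreover have "((\<lambda>l. integral T (\<lambda>x. h (l *\<^sub>R x))) has_field_derivative
      - real DIM('a) * I) (at 1)"
  proof (rule has_field_derivative_transform_within_open[of "\<lambda>l. I / l ^ DIM('a)" _ _ U])
    show "((\<lambda>l. I / l ^ DIM('a)) has_field_derivative - real DIM('a) * I) (at 1)"
      by (auto intro!: derivative_eq_intros)
    show "open U" "1 \<in> U" by (auto simp: U_def)
    show "\<And>l. l \<in> U \<Longrightarrow> I / l ^ DIM('a) = integral T (\<lambda>x. h (l *\<^sub>R x))"
      using gl by (metis integral_unique)
  qed
  ultimately have eq: "integral T (\<lambda>x. H x \<bullet> x) = - real DIM('a) * I"
    by (rule DERIV_unique)
  have "integral UNIV (\<lambda>x. H x \<bullet> x) = integral T (\<lambda>x. H x \<bullet> x)"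
  proof -
    have "(\<lambda>x. H x \<bullet> x) integrable_on T" unfolding T_def
      by (rule integrable_continuous) (auto intro!: continuous_intros continuous_on_subset[OF contH])
    then have "((\<lambda>x. H x \<bullet> x) has_integral integral T (\<lambda>x. H x \<bullet> x)) UNIV"
    proof (rule has_integral_on_superset[OF integrable_integral])
      fix x assume "x \<notin> T"
      then have "\<not> norm x \<le> 2 * M" using norm_le_cbox unfolding T_def by fastforce
      then show "H x \<bullet> x = 0" using suppH M by simp
    qed auto
    then show ?thesis by (simp add: integral_unique)
  qed
  moreover have "integral UNIV h = I"
  proof -
    have "(h has_integral I) UNIV"
    proof (rule has_integral_on_superset[OF hI])
      fix x assume "x \<notin> cbox (-B) B"
      then have "\<not> norm x \<le> M" using norm_le_cbox unfolding B_def by fastforce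
      then show "h x = 0" using supp by simp
    qed auto
    then show ?thesis by (simp add: integral_unique)
  qed
  ultimately show ?thesis using eq by simp
qed


lemma W_deriv:
  fixes r C e a :: real
  assumes "r > 0"
  shows "((\<lambda>r. C * exp (e * r powr (a + 1))) has_real_derivative
           (C * exp (e * r powr (a + 1))) * (e * (a + 1) * r powr a)) (at r)"
  using assms by (auto intro!: derivative_eq_intros has_real_derivative_powr simp: algebra_simps)

lemma q_deriv:
  fixes r al be a :: real
  assumes "r > 0"
  shows "((\<lambda>r. - al / r^2 - be * r powr (a - 1)) has_real_derivative
           2 * al / r^3 - be * (a - 1) * r powr (a - 2)) (at r)"
  using assms apply (auto intro!: derivative_eq_intros has_real_derivative_powr)
  by (simp add: eval_nat_numeral field_simps)

lemma k_cont:
  fixes C e a al be :: real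
  shows
  "continuous_on {0<..} (\<lambda>r. (C * exp (e * r powr (a + 1))) * (- al / r^2 - be * r powr (a - 1)))"
  by (auto intro!: continuous_intros)

lemma kd_cont:
  fixes C e a al be :: real
  shows
  "continuous_on {0<..} (\<lambda>r. (C * exp (e * r powr (a + 1))) * (e * (a + 1) * r powr a) * (- al / r^2 - be * r powr (a - 1))
     + (C * exp (e * r powr (a + 1))) * (2 * al / r^3 - be * (a - 1) * r powr (a - 2)))"
  by (auto intro!: continuous_intros)


lemma key_identity:
  fixes r Uz G p w al be NN a :: real
  assumes r: "r > 0" and al: "al = (NN - 2) / 2"
  shows "al^2 * (Uz^2 / r^2 * w) + be^2 * (p^2 * Uz^2 * w) + be * (NN - 1 + a) * (p / r * Uz^2 * w)
     + (2 * Uz * (w * (- al / r^2 - be * (p / r))) * G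
        + Uz^2 * (w * (2 * be * p) * (- al / r^2 - be * (p / r)) + w * (2 * al / r^3 - be * (a - 1) * (p / r^2))) * r
        + NN * (Uz^2 * (w * (- al / r^2 - be * (p / r)))))
     + w * (G / r - (- al / r - be * p) * Uz)^2 = (G / r)^2 * w"
  using r unfolding al by (simp add: field_simps power2_eq_square eval_nat_numeral)


lemma cont_norm_comp:
  "continuous_on {0<..} f \<Longrightarrow> continuous_on (-{0}) (\<lambda>y::'a::real_normed_vector. f (norm y))"
  by (rule continuous_on_compose2[of "{0<..}" f]) (auto intro: continuous_intros)

theorem corollary3p2:
  fixes \<psi> :: "real \<Rightarrow> real" and u :: "real ^ 'n \<Rightarrow> real"
    and R A b a :: real
  assumes N3: "CARD('n) \<ge> 3"
    and psi_smooth: "\<exists>d. smooth_derivs_nonneg \<psi> d \<and> d 1 0 = 1 \<and> (\<forall>k. d (2 * k) 0 = 0)"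
    and psi_nonneg: "\<forall>r\<ge>0. \<psi> r \<ge> 0"
    and psi_pos: "\<forall>r>0. \<psi> r > 0"
    and R: "R > 0" and A: "A > 0" and b: "b > 0" and a: "a \<ge> -1"
    and psi_tail: "\<forall>r\<ge>R. \<psi> r = A * r * exp (b * r powr (a + 1))"
    and u_smooth: "smooth u"
    and u_cpt: "bounded {x. u x \<noteq> 0}"
    and u_supp: "\<forall>x. norm x < R \<longrightarrow> u x = 0"
  shows "(\<integral>x. (radial_deriv u x)\<^sup>2 * model_weight \<psi> x \<partial>lborel) \<ge>
      (real CARD('n) - 2)\<^sup>2 / 4 * (\<integral>x. (u x)\<^sup>2 / (norm x)\<^sup>2 * model_weight \<psi> x \<partial>lborel)
    + (a + 1)\<^sup>2 * b\<^sup>2 * (real CARD('n) - 1)\<^sup>2 / 4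
        * (\<integral>x. norm x powr (2 * a) * (u x)\<^sup>2 * model_weight \<psi> x \<partial>lborel)
    + b * (a + 1) * (real CARD('n) - 1) * (real CARD('n) - 1 + a) / 2
        * (\<integral>x. norm x powr (a - 1) * (u x)\<^sup>2 * model_weight \<psi> x \<partial>lborel)"
proof -
  define NN where "NN = real CARD('n)"
  have n1: "real (CARD('n) - 1) = NN - 1" using N3 by (simp add: NN_def of_nat_diff)
  define e where "e = (NN - 1) * b"
  define C where "C = A ^ (CARD('n) - 1)"
  have Cpos: "C > 0" using A by (simp add: C_def)
  define al where "al = (NN - 2) / 2"
  define be where "be = (NN - 1) * b * (a + 1) / 2"
  define W where "W = (\<lambda>r::real. C * exp (e * r powr (a + 1)))"
  define q where "q = (\<lambda>r::real. - al / r^2 - be * r powr (a - 1))"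
  define q' where "q' = (\<lambda>r::real. 2 * al / r^3 - be * (a - 1) * r powr (a - 2))"
  define k where "k = (\<lambda>r. W r * q r)"
  define k' where "k' = (\<lambda>r. W r * (e * (a + 1) * r powr a) * q r + W r * q' r)"
  have Wpos: "\<And>r. W r > 0" using Cpos by (simp add: W_def)
  have k_deriv: "(k has_real_derivative k' r) (at r)" if "r > 0" for r
    unfolding k_def k'_def W_def q_def q'_def by (rule DERIV_mult[OF W_deriv[OF that] q_deriv[OF that], THEN DERIV_cong]) (simp add: algebra_simps)
  have kc: "continuous_on {0<..} k" unfolding k_def W_def q_def by (auto intro!: continuous_intros)
  have k'c: "continuous_on {0<..} k'" unfolding k'_def W_def q_def q'_def by (auto intro!: continuous_intros)
  have Wc: "continuous_on {0<..} W" unfolding W_def by (auto intro!: continuous_intros)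
  have pc: "\<And>t. continuous_on {0<..} (\<lambda>r::real. r powr t)" by (auto intro!: continuous_intros)

  define gu where "gu = (\<lambda>y. \<Sum>i\<in>Basis. frechet_derivative u (at y) i *\<^sub>R i)"
  have "Ck 1 u" using u_smooth unfolding smooth_def by blast
  then have udiff: "\<And>x. u differentiable (at x)"
    and pcont: "\<And>i. i \<in> Basis \<Longrightarrow> continuous_on UNIV (\<lambda>x. frechet_derivative u (at x) i)"
    by auto
  have fd_eq: "frechet_derivative u (at y) = (\<lambda>v. gu y \<bullet> v)" for y
  proof
    fix v
    have lin: "linear (frechet_derivative u (at y))"
      using udiff[of y] frechet_derivative_works has_derivative_linear by blast
    show "frechet_derivative u (at y) v = gu y \<bullet> v"
      using Linear_Algebra.linear_componentwise[OF lin, of v 1]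
      unfolding gu_def inner_sum_left inner_scaleR_left by (simp add: inner_commute mult.commute)
  qed
  have uder: "\<And>y. (u has_derivative (\<lambda>v. gu y \<bullet> v)) (at y)"
    using udiff frechet_derivative_works fd_eq by metis
  have gucont: "continuous_on UNIV gu"
    unfolding gu_def by (auto intro!: continuous_intros pcont)
  have ucont: "continuous_on UNIV u"
    using udiff by (meson continuous_at_imp_continuous_on differentiable_imp_continuous_within)
  have gu_zero: "gu y = 0" if S: "open S" "y \<in> S" "\<And>z. z \<in> S \<Longrightarrow> u z = 0" for S y
  proof -
    have "(u has_derivative (\<lambda>v. 0)) (at y)"
      by (rule has_derivative_transform_within_open[of "\<lambda>_. 0" _ _ _ S]) (use S in auto)
    then have "(\<lambda>v. gu y \<bullet> v) = (\<lambda>v. 0)" using has_derivative_unique uder by blast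
    then have "gu y \<bullet> gu y = 0" by meson
    then show ?thesis by simp
  qed
  obtain M0 where M0: "\<And>x. u x \<noteq> 0 \<Longrightarrow> norm x \<le> M0"
    using u_cpt unfolding bounded_iff by auto
  define M where "M = max M0 R + 1"
  have MR: "M > R" "M > M0" "M > 0" using R by (auto simp: M_def)
  have u_out: "u y = 0" if "norm y > M0" for y using M0 that by force
  have u_in: "u y = 0" if "norm y < R" for y using u_supp that by blast
  have gu_out: "gu y = 0" if "norm y > M0" for y
    by (rule gu_zero[of "-cball 0 M0"]) (use that u_out in auto)
  have gu_in: "gu y = 0" if "norm y < R" for y
    by (rule gu_zero[of "ball 0 R"]) (use that u_in in auto)
  define h where "h = (\<lambda>y. (u y)^2 * k (norm y))"
  define H where "H = (\<lambda>y. (2 * u y * k (norm y)) *\<^sub>R gu y + ((u y)^2 * k' (norm y)) *\<^sub>R sgn y)"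
  have H0: "H y = 0" if "u y = 0" "gu y = 0" for y using that by (simp add: H_def)
  have hder: "(h has_derivative (\<lambda>v. H y \<bullet> v)) (at y)" for y
  proof (cases "y = 0")
    case True
    have "u y = 0" "gu y = 0" using True R u_in gu_in by auto
    then have Hy: "H y = 0" by (rule H0)
    show ?thesis
      by (rule has_derivative_transform_within_open[of "\<lambda>_. 0" _ _ _ "ball 0 R"])
         (use Hy True R u_in in \<open>auto simp: h_def\<close>)
  next
    case False
    have d1: "((\<lambda>y. (u y)^2) has_derivative (\<lambda>v. 2 * u y * (gu y \<bullet> v))) (at y)"
      by (auto intro!: derivative_eq_intros uder)
    have d2: "((\<lambda>y. k (norm y)) has_derivative (\<lambda>v. k' (norm y) * (v \<bullet> sgn y))) (at y)"
      using has_derivative_compose[OF has_derivative_norm[OF False] k_deriv[unfolded has_field_derivative_def]]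
        False by simp
    show ?thesis
      unfolding h_def
      by (rule has_derivative_eq_rhs[OF has_derivative_mult[OF d1 d2]])
         (simp add: fun_eq_iff H_def inner_add_left algebra_simps inner_commute)
  qed
  have kn: "continuous_on (-{0}) (\<lambda>y::real^'n. k (norm y))" by (rule cont_norm_comp[OF kc])
  have k'n: "continuous_on (-{0}) (\<lambda>y::real^'n. k' (norm y))" by (rule cont_norm_comp[OF k'c])
  have Wn: "continuous_on (-{0}) (\<lambda>y::real^'n. W (norm y))" by (rule cont_norm_comp[OF Wc])
  have pn: "continuous_on (-{0}) (\<lambda>y::real^'n. norm y powr t)" for t by (rule cont_norm_comp[OF pc])
  have Hc1: "continuous_on (-{0}) H"
    unfolding H_def
    by (intro continuous_intros kn k'n continuous_on_subset[OF gucont] continuous_on_subset[OF ucont]) auto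
  have Hc2: "continuous_on (ball 0 R) H"
    by (rule continuous_on_eq[of _ "\<lambda>_. 0"]) (auto intro!: H0 u_in gu_in)
  have Hcont: "continuous_on UNIV H"
    unfolding continuous_on_eq_continuous_at[OF open_UNIV]
  proof
    fix y :: "real^'n"
    show "isCont H y"
    proof (cases "y = 0")
      case True
      have "\<forall>x\<in>ball 0 R. isCont H x" using Hc2 continuous_on_eq_continuous_at[OF open_ball] by blast
      then show ?thesis using True R by simp
    next
      case False
      then show ?thesis using Hc1 continuous_on_eq_continuous_at[of "-{0}"] by auto
    qed
  qed
  have dil: "integral UNIV (\<lambda>x. H x \<bullet> x) = - NN * integral UNIV h"
    using dilation_identity[OF hder Hcont MR(3)] u_out gu_out MR
    by (simp add: NN_def h_def H0)
  have hcont: "continuous_on UNIV h"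
    using hder by (meson continuous_at_imp_continuous_on has_derivative_continuous)
  define K where "K = cball (0::real^'n) M - ball 0 R"
  have cK: "compact K" unfolding K_def by (intro compact_diff compact_cball open_ball)
  have K0: "K \<subseteq> -{0}" using R by (auto simp: K_def)
  have outK: "u x = 0 \<and> gu x = 0" if "x \<notin> K" for x
  proof (cases "norm x < R")
    case True then show ?thesis using u_in gu_in by auto
  next
    case False
    then have "norm x > M" using that by (auto simp: K_def)
    then show ?thesis using u_out gu_out MR by auto
  qed
  have integK: "integrable lborel f" if cf: "continuous_on K f" and z: "\<And>x. x \<notin> K \<Longrightarrow> f x = 0" for f :: "real^'n \<Rightarrow> real"
  proof -
    have "integrable lborel (\<lambda>x. indicator K x *\<^sub>R f x)" by (rule borel_integrable_compact[OF cK cf])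
    moreover have "(\<lambda>x. indicator K x *\<^sub>R f x) = f" using z by (auto simp: fun_eq_iff indicator_def)
    ultimately show ?thesis by simp
  qed
  define Lf where "Lf = (\<lambda>x. (gu x \<bullet> x / norm x)^2 * W (norm x))"
  define g1 where "g1 = (\<lambda>x::real^'n. (u x)^2 / (norm x)^2 * W (norm x))"
  define g2 where "g2 = (\<lambda>x::real^'n. norm x powr (2 * a) * (u x)^2 * W (norm x))"
  define g3 where "g3 = (\<lambda>x::real^'n. norm x powr (a - 1) * (u x)^2 * W (norm x))"
  define Pf where "Pf = (\<lambda>x. H x \<bullet> x + NN * h x)"
  have iL: "integrable lborel Lf"
    by (rule integK, rule continuous_on_subset[OF _ K0])
       (auto simp: Lf_def intro!: continuous_intros Wn continuous_on_subset[OF gucont] dest: outK)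
  have i1: "integrable lborel g1"
    by (rule integK, rule continuous_on_subset[OF _ K0])
       (auto simp: g1_def intro!: continuous_intros Wn continuous_on_subset[OF ucont] dest: outK)
  have i2: "integrable lborel g2"
    by (rule integK, rule continuous_on_subset[OF _ K0])
       (auto simp: g2_def intro!: continuous_intros Wn pn continuous_on_subset[OF ucont] dest: outK)
  have i3: "integrable lborel g3"
    by (rule integK, rule continuous_on_subset[OF _ K0])
       (auto simp: g3_def intro!: continuous_intros Wn pn continuous_on_subset[OF ucont] dest: outK)
  have iHx: "integrable lborel (\<lambda>x. H x \<bullet> x)"
    by (rule integK) (auto intro!: continuous_intros continuous_on_subset[OF Hcont] dest: outK simp: H0)
  have ih: "integrable lborel h"
    by (rule integK[OF continuous_on_subset[OF hcont]]) (auto dest: outK simp: h_def)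
  have iP: "integrable lborel Pf" unfolding Pf_def using iHx ih by auto
  have intP: "(\<integral>x. Pf x \<partial>lborel) = 0"
    unfolding Pf_def using iHx ih dil integral_lborel[OF iHx] integral_lborel[OF ih] by simp
  have mw: "model_weight \<psi> x = W (norm x)" if "norm x \<ge> R" for x :: "real^'n"
  proof -
    have r: "norm x > 0" using that R by linarith
    have "\<psi> (norm x) / norm x = A * exp (b * norm x powr (a + 1))"
      using psi_tail that r by simp
    then have "model_weight \<psi> x = (A * exp (b * norm x powr (a + 1))) ^ (CARD('n) - 1)"
      by (simp add: model_weight_def)
    also have "\<dots> = C * exp (real (CARD('n) - 1) * (b * norm x powr (a + 1)))"
      by (simp only: C_def power_mult_distrib exp_of_nat_mult)
    also have "\<dots> = W (norm x)" by (simp add: W_def n1 e_def mult.assoc NN_def)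
    finally show ?thesis .
  qed
  have rd: "radial_deriv u x = gu x \<bullet> x / norm x" for x
    by (simp add: radial_deriv_def fd_eq inner_scaleR_right divide_inverse mult.commute)
  have eqL: "(\<lambda>x. (radial_deriv u x)\<^sup>2 * model_weight \<psi> x) = Lf"
  proof
    fix x :: "real^'n"
    show "(radial_deriv u x)\<^sup>2 * model_weight \<psi> x = Lf x"
      by (cases "norm x < R") (auto simp: Lf_def rd gu_in mw)
  qed
  have eq1: "(\<lambda>x. (u x)\<^sup>2 / (norm x)\<^sup>2 * model_weight \<psi> x) = g1"
  proof
    fix x :: "real^'n"
    show "(u x)\<^sup>2 / (norm x)\<^sup>2 * model_weight \<psi> x = g1 x"
      by (cases "norm x < R") (auto simp: g1_def u_in mw)
  qed
  have eq2: "(\<lambda>x. norm x powr (2 * a) * (u x)\<^sup>2 * model_weight \<psi> x) = g2"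
  proof
    fix x :: "real^'n"
    show "norm x powr (2 * a) * (u x)\<^sup>2 * model_weight \<psi> x = g2 x"
      by (cases "norm x < R") (auto simp: g2_def u_in mw)
  qed
  have eq3: "(\<lambda>x. norm x powr (a - 1) * (u x)\<^sup>2 * model_weight \<psi> x) = g3"
  proof
    fix x :: "real^'n"
    show "norm x powr (a - 1) * (u x)\<^sup>2 * model_weight \<psi> x = g3 x"
      by (cases "norm x < R") (auto simp: g3_def u_in mw)
  qed
  have c1: "(real CARD('n) - 2)\<^sup>2 / 4 = al^2" by (simp add: al_def NN_def power_divide)
  have c2: "(a + 1)\<^sup>2 * b\<^sup>2 * (real CARD('n) - 1)\<^sup>2 / 4 = be^2"
    by (simp add: be_def NN_def power_divide power_mult_distrib)
  have c3: "b * (a + 1) * (real CARD('n) - 1) * (real CARD('n) - 1 + a) / 2 = be * (NN - 1 + a)"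
    by (simp add: be_def NN_def)
  have pw: "al^2 * g1 x + be^2 * g2 x + be * (NN - 1 + a) * g3 x + Pf x \<le> Lf x" for x
  proof (cases "x = 0")
    case True
    have "u x = 0" "gu x = 0" using True R u_in gu_in by auto
    then show ?thesis by (simp add: g1_def g2_def g3_def Pf_def H0 h_def Lf_def)
  next
    case False
    define r where "r = norm x"
    have r: "r > 0" using False by (simp add: r_def)
    define p where "p = r powr a"
    have p1: "r powr (a - 1) = p / r" using r by (simp add: p_def powr_diff)
    have p2: "r powr (a - 2) = p / r^2" using r by (simp add: p_def powr_diff)
    have p3: "r powr (2 * a) = p^2" using r
      by (simp add: p_def power2_eq_square powr_add[symmetric])
    have ea: "e * (a + 1) = 2 * be" by (simp add: e_def be_def)
    have sx: "sgn x \<bullet> x = r"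
      using r by (simp add: r_def sgn_div_norm inner_scaleR_left power2_norm_eq_inner[symmetric]
          power2_eq_square)
    define w where "w = W r"
    define U0 where "U0 = u x"
    define G where "G = gu x \<bullet> x"
    have wpos: "w > 0" using Wpos by (simp add: w_def)
    have PfE: "Pf x = 2 * U0 * (w * (- al / r^2 - be * (p / r))) * G
        + U0^2 * (w * (2 * be * p) * (- al / r^2 - be * (p / r)) + w * (2 * al / r^3 - be * (a - 1) * (p / r^2))) * r
        + NN * (U0^2 * (w * (- al / r^2 - be * (p / r))))"
      unfolding Pf_def H_def h_def
      by (simp add: inner_add_left sx flip: r_def w_def U0_def G_def)
         (simp add: k_def k'_def q_def q'_def p1 p2 w_def ea mult.assoc[symmetric] flip: p_def)
    have gE: "g1 x = U0^2 / r^2 * w" "g2 x = p^2 * U0^2 * w" "g3 x = p / r * U0^2 * w"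
      "Lf x = (G / r)^2 * w"
      by (simp_all add: g1_def g2_def g3_def Lf_def p1 p3 flip: r_def w_def U0_def G_def)
    have "w * (G / r - (- al / r - be * p) * U0)^2 \<ge> 0" using wpos by simp
    then show ?thesis unfolding PfE gE
      using key_identity[OF r al_def, where Uz=U0 and G=G and p=p and w=w and be=be and a=a] by linarith
  qed
  have "(\<integral>x. al^2 * g1 x + be^2 * g2 x + be * (NN - 1 + a) * g3 x + Pf x \<partial>lborel) \<le> (\<integral>x. Lf x \<partial>lborel)"
    by (rule integral_mono) (use pw i1 i2 i3 iP iL in auto)
  moreover have "(\<integral>x. al^2 * g1 x + be^2 * g2 x + be * (NN - 1 + a) * g3 x + Pf x \<partial>lborel)
     = al^2 * (\<integral>x. g1 x \<partial>lborel) + be^2 * (\<integral>x. g2 x \<partial>lborel) + be * (NN - 1 + a) * (\<integral>x. g3 x \<partial>lborel)"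
    using i1 i2 i3 iP intP by simp
  ultimately show ?thesis unfolding eqL eq1 eq2 eq3 c1 c2 c3 by simp
qed

end
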